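(* Let $R$ be an integral domain; if $R=\bigoplus_{i\ge0}[R]_i$ is graded, assume $[R]_1\neq0$. Let $A=\begin{pmatrix}a&\mathfrak b\\ \mathfrak c&A'\end{pmatrix}\in R^{n,n}$ with $a\in R$, $\mathfrak b$ a row vector and $\mathfrak c$ a column vector in $R^{n-1}$, and $A'\in R^{n-1,n-1}$. If $\det A$, $\det A'$, $\mathfrak b$ and $\mathfrak c$ are all non-zero, then $A$ is linked to a block diagonal matrix $\begin{pmatrix}b&0\\0&B'\end{pmatrix}$ with $b\in R$, $B'\in R^{n-1,n-1}$. If $R$ is graded and $A$ is homogeneous, this block diagonal matrix can be taken homogeneous.
   Context: $R^{n,n}$ denotes the $n\times n$ matrices over $R$ and $B^t$ the transpose. Two matrices are equivalent if one equals $PAQ$ with $P,Q$ invertible. Matrices $A,B\in R^{n,n}$ are linked in one step if $A\cdot B^t$ is equivalent to a symmetric matrix whose determinant is a non-zero divisor of $R$; $A,B$ are linked if there is a chain $A=A_0,A_1,\dots,A_v=B$ with $A_i$ linked in one step to $A_{i+1}$ for all $i$, where in the graded case all $A_i$ are required to be homogeneous, i.e. to represent degree-preserving homomorphisms between graded free $R$-modules. *)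

theory Defs
  imports "Jordan_Normal_Form.Determinant"
begin

definition non_zero_divisor :: "'a::comm_ring_1 \<Rightarrow> bool" where
  "non_zero_divisor d \<longleftrightarrow> (\<forall>x. d * x = 0 \<longrightarrow> x = 0)"

definition mat_equiv :: "nat \<Rightarrow> 'a::comm_ring_1 mat \<Rightarrow> 'a mat \<Rightarrow> bool" where
  "mat_equiv n A B \<longleftrightarrow> (\<exists>P Q. P \<in> carrier_mat n n \<and> Q \<in> carrier_mat n n \<and>
      invertible_mat P \<and> invertible_mat Q \<and> B = P * A * Q)"

definition linked_one_step :: "nat \<Rightarrow> 'a::comm_ring_1 mat \<Rightarrow> 'a mat \<Rightarrow> bool" where
  "linked_one_step n A B \<longleftrightarrow> A \<in> carrier_mat n n \<and> B \<in> carrier_mat n n \<and>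
     (\<exists>S. S \<in> carrier_mat n n \<and> transpose_mat S = S \<and> non_zero_divisor (det S) \<and>
          mat_equiv n (A * transpose_mat B) S)"

text \<open>Linked via a chain A = A_0, ..., A_v = B all of whose members satisfy P
  (P = (\<lambda>_. True) in the ungraded case, homogeneity in the graded case).\<close>
definition linked_by :: "('a::comm_ring_1 mat \<Rightarrow> bool) \<Rightarrow> nat \<Rightarrow> 'a mat \<Rightarrow> 'a mat \<Rightarrow> bool" where
  "linked_by P n A B \<longleftrightarrow> (\<exists>xs. xs \<noteq> [] \<and> hd xs = A \<and> last xs = B \<and> (\<forall>X\<in>set xs. P X) \<and>
      (\<forall>i. Suc i < length xs \<longrightarrow> linked_one_step n (xs ! i) (xs ! Suc i)))"

abbreviation linked :: "nat \<Rightarrow> 'a::comm_ring_1 mat \<Rightarrow> 'a mat \<Rightarrow> bool" where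
  "linked \<equiv> linked_by (\<lambda>_. True)"

definition grading :: "(nat \<Rightarrow> 'a::comm_ring_1 set) \<Rightarrow> bool" where
  "grading G \<longleftrightarrow>
     (\<forall>i. 0 \<in> G i \<and> (\<forall>x\<in>G i. \<forall>y\<in>G i. x + y \<in> G i \<and> - x \<in> G i)) \<and>
     (\<forall>i j. \<forall>x\<in>G i. \<forall>y\<in>G j. x * y \<in> G (i + j)) \<and>
     (\<forall>x. \<exists>!f. (\<forall>i. f i \<in> G i) \<and> finite {i. f i \<noteq> 0} \<and> x = (\<Sum>i\<in>{i. f i \<noteq> 0}. f i))"

definition hcomp :: "(nat \<Rightarrow> 'a::comm_ring_1 set) \<Rightarrow> int \<Rightarrow> 'a set" where
  "hcomp G d = (if d < 0 then {0} else G (nat d))"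

text \<open>A matrix is homogeneous if it represents a degree-preserving homomorphism
  \<Oplus>_j R(-e_j) \<rightarrow> \<Oplus>_i R(-d_i) of graded free modules, i.e. entry (i,j) is
  homogeneous of degree e_j - d_i.\<close>
definition homogeneous_mat :: "(nat \<Rightarrow> 'a::comm_ring_1 set) \<Rightarrow> 'a mat \<Rightarrow> bool" where
  "homogeneous_mat G A \<longleftrightarrow> (\<exists>d e :: nat \<Rightarrow> int.
      \<forall>i < dim_row A. \<forall>j < dim_col A. A $$ (i, j) \<in> hcomp G (e j - d i))"

definition block_mat :: "'a::comm_ring_1 \<Rightarrow> 'a vec \<Rightarrow> 'a vec \<Rightarrow> 'a mat \<Rightarrow> 'a mat" where
  "block_mat a b c A' = four_block_mat (mat 1 1 (\<lambda>_. a)) (mat 1 (dim_vec b) (\<lambda>(i, j). b $ j))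
      (mat (dim_vec c) 1 (\<lambda>(i, j). c $ i)) A'"

end

theory Submission
  imports Defs
begin


definition gclosed :: "(nat \<Rightarrow> 'a::comm_ring_1 set) \<Rightarrow> bool" where
  "gclosed G \<longleftrightarrow> (\<forall>i. 0 \<in> G i \<and> (\<forall>x\<in>G i. \<forall>y\<in>G i. x + y \<in> G i \<and> - x \<in> G i)) \<and>
     (\<forall>i j. \<forall>x\<in>G i. \<forall>y\<in>G j. x * y \<in> G (i + j)) \<and> 1 \<in> G 0"

lemma hcomp_0[simp]: "gclosed G \<Longrightarrow> 0 \<in> hcomp G k"
  unfolding gclosed_def hcomp_def by auto

lemma hcomp_add: "gclosed G \<Longrightarrow> x \<in> hcomp G k \<Longrightarrow> y \<in> hcomp G k \<Longrightarrow> x + y \<in> hcomp G k"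
  unfolding gclosed_def hcomp_def by (auto split: if_splits)

lemma hcomp_uminus: "gclosed G \<Longrightarrow> x \<in> hcomp G k \<Longrightarrow> - x \<in> hcomp G k"
  unfolding gclosed_def hcomp_def by (auto split: if_splits)

lemma hcomp_diff: "gclosed G \<Longrightarrow> x \<in> hcomp G k \<Longrightarrow> y \<in> hcomp G k \<Longrightarrow> x - y \<in> hcomp G k"
  using hcomp_add[of G x k "- y"] hcomp_uminus[of G y k] by simp

lemma hcomp_one: "gclosed G \<Longrightarrow> 1 \<in> hcomp G 0"
  unfolding gclosed_def hcomp_def by auto

lemma hcomp_mult: assumes "gclosed G" "x \<in> hcomp G i" "y \<in> hcomp G j"
  shows "x * y \<in> hcomp G (i + j)"
proof (cases "i < 0 \<or> j < 0")
  case True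
  then have "x = 0 \<or> y = 0" using assms unfolding hcomp_def by auto
  then show ?thesis using hcomp_0[OF assms(1)] by auto
next
  case False
  then have "x \<in> G (nat i)" "y \<in> G (nat j)" using assms unfolding hcomp_def by auto
  then have "x * y \<in> G (nat i + nat j)" using assms(1) unfolding gclosed_def by blast
  moreover have "nat (i + j) = nat i + nat j" using False by auto
  ultimately show ?thesis using False unfolding hcomp_def by auto
qed

lemma hcomp_cong: "x \<in> hcomp G i \<Longrightarrow> i = j \<Longrightarrow> x \<in> hcomp G j" by simp

lemma hcomp_sum: assumes "gclosed G" "\<And>x. x \<in> I \<Longrightarrow> f x \<in> hcomp G k"
  shows "sum f I \<in> hcomp G k"
  using assms(2)
proof (induction I rule: infinite_finite_induct)
  case (insert x F)
  then show ?case using hcomp_add[OF assms(1)] by auto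
qed (auto simp: assms(1))

lemma hcomp_prod: assumes "gclosed G" "\<And>x. x \<in> I \<Longrightarrow> f x \<in> hcomp G (g x)"
  shows "prod f I \<in> hcomp G (\<Sum>x\<in>I. g x)"
  using assms(2)
proof (induction I rule: infinite_finite_induct)
  case (insert x F)
  then have "f x * prod f F \<in> hcomp G (g x + (\<Sum>x\<in>F. g x))"
    using hcomp_mult[OF assms(1)] by auto
  then show ?case using insert by auto
qed (auto simp: hcomp_one[OF assms(1)])

lemma hcomp_signof: assumes "gclosed G" "x \<in> hcomp G k" shows "signof p * x \<in> hcomp G k"
  using assms hcomp_uminus[OF assms(1)] by (auto simp: sign_def)

lemma hcomp_det: assumes G: "gclosed G" and M: "M \<in> carrier_mat k k"
  and h: "\<And>i j. i < k \<Longrightarrow> j < k \<Longrightarrow> M $$ (i,j) \<in> hcomp G (f j - g i)"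
shows "det M \<in> hcomp G ((\<Sum>j<k. f j) - (\<Sum>i<k. g i))"
proof -
  have "det M = (\<Sum> p \<in> {p. p permutes {0 ..< k}}. signof p * (\<Prod> i = 0 ..< k. M $$ (i, p i)))"
    using det_def'[OF M] .
  also have "\<dots> \<in> hcomp G ((\<Sum>j<k. f j) - (\<Sum>i<k. g i))"
  proof (rule hcomp_sum[OF G], rule hcomp_signof[OF G])
    fix p assume "p \<in> {p. p permutes {0 ..< k}}"
    then have p: "p permutes {0..<k}" by auto
    have "(\<Prod> i = 0 ..< k. M $$ (i, p i)) \<in> hcomp G (\<Sum>i=0..<k. f (p i) - g i)"
      by (rule hcomp_prod[OF G], rule h, auto, metis atLeast0LessThan lessThan_iff permutes_in_image[OF p])
    moreover have "(\<Sum>i=0..<k. f (p i) - g i) = (\<Sum>j<k. f j) - (\<Sum>i<k. g i)"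
    proof -
      have "(\<Sum>i=0..<k. f (p i)) = (\<Sum>j=0..<k. f j)"
        using sum.permute[OF p, of f] by (simp add: comp_def)
      then show ?thesis by (simp add: sum_subtractf atLeast0LessThan)
    qed
    ultimately show "(\<Prod> i = 0 ..< k. M $$ (i, p i)) \<in> hcomp G ((\<Sum>j<k. f j) - (\<Sum>i<k. g i))" by simp
  qed
  finally show ?thesis .
qed

lemma sum_insert_index: assumes "j < Suc k"
  shows "(\<Sum>s<k. (f (insert_index j s)::int)) = (\<Sum>t<Suc k. f t) - f j"
proof -
  have "(\<Sum>s<k. f (insert_index j s)) = sum f (insert_index j ` {0..<k})"
    by (subst sum.reindex[OF insert_index_inj_on]) (simp add: atLeast0LessThan)
  also have "\<dots> = sum f ({0..<Suc k} - {j})" using insert_index_image[OF assms] by simp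
  also have "\<dots> = sum f {0..<Suc k} - f j" using assms by (subst sum_diff1) auto
  finally show ?thesis by (simp add: atLeast0LessThan)
qed

lemma hcomp_cofactor: assumes G: "gclosed G" and M: "M \<in> carrier_mat (Suc k) (Suc k)"
  and h: "\<And>i j. i < Suc k \<Longrightarrow> j < Suc k \<Longrightarrow> M $$ (i,j) \<in> hcomp G (f j - g i)"
  and ij: "i < Suc k" "j < Suc k"
shows "cofactor M i j \<in> hcomp G (((\<Sum>t<Suc k. f t) - f j) - ((\<Sum>t<Suc k. g t) - g i))"
proof -
  have D: "mat_delete M i j \<in> carrier_mat k k" using mat_delete_carrier[OF M] by simp
  have "det (mat_delete M i j) \<in> hcomp G ((\<Sum>s<k. f (insert_index j s)) - (\<Sum>r<k. g (insert_index i r)))"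
  proof (rule hcomp_det[OF G D])
    fix r s assume "r < k" "s < k"
    then show "mat_delete M i j $$ (r, s) \<in> hcomp G (f (insert_index j s) - g (insert_index i r))"
      using mat_delete_index[OF M ij, of r s, symmetric] h[of "insert_index i r" "insert_index j s"]
      by (auto simp: insert_index_def)
  qed
  then have "det (mat_delete M i j) \<in> hcomp G (((\<Sum>t<Suc k. f t) - f j) - ((\<Sum>t<Suc k. g t) - g i))"
    using sum_insert_index[OF ij(2), of f] sum_insert_index[OF ij(1), of g] by simp
  then show ?thesis unfolding cofactor_def
    using hcomp_uminus[OF G] by (cases "even (i+j)") auto
qed



lemma invertible_one: "invertible_mat (1\<^sub>m n :: 'a::comm_ring_1 mat)"
  unfolding invertible_mat_def inverts_mat_def square_mat.simps
  by (intro conjI exI[of _ "1\<^sub>m n"]) simp_all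

lemma one_step_right:
  fixes A S :: "'a::idom mat"
  assumes A: "A \<in> carrier_mat n n" and S: "S \<in> carrier_mat n n" and St: "transpose_mat S = S"
    and dA: "det A \<noteq> 0" and dS: "det S \<noteq> 0"
  shows "linked_one_step n A (A * S)"
proof -
  let ?M = "A * transpose_mat (A * S)"
  have AS: "A * S \<in> carrier_mat n n" using A S by auto
  have At: "transpose_mat A \<in> carrier_mat n n" using A by auto
  have M: "?M \<in> carrier_mat n n" using A AS by auto
  have tr: "transpose_mat (A * S) = S * transpose_mat A"
    using transpose_mult[OF A S] St by simp
  have "transpose_mat ?M = (A * S) * transpose_mat A"
    using transpose_mult[OF A, of "transpose_mat (A * S)" n] AS by simp
  also have "\<dots> = A * (S * transpose_mat A)" by (rule assoc_mult_mat[OF A S At])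
  finally have sym: "transpose_mat ?M = ?M" using tr by simp
  have d1: "det ?M = det A * det (transpose_mat (A * S))"
    by (rule det_mult[OF A]) (use AS in auto)
  have "det ?M = det A * (det A * det S)"
    unfolding d1 det_transpose[OF AS] det_mult[OF A S] ..
  then have "det ?M \<noteq> 0" using dA dS by simp
  then have nzd: "non_zero_divisor (det ?M)" unfolding non_zero_divisor_def by simp
  have eq: "?M = 1\<^sub>m n * ?M * 1\<^sub>m n" using left_mult_one_mat[OF M] right_mult_one_mat[OF M] by simp
  show ?thesis unfolding linked_one_step_def mat_equiv_def
    apply (intro conjI A AS)
    apply (rule exI[of _ ?M])
    apply (intro conjI M sym nzd)
    apply (rule exI[of _ "1\<^sub>m n"], rule exI[of _ "1\<^sub>m n"])
    using eq invertible_one[where 'a='a] by simp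
qed
lemma linked_by_refl: "P A \<Longrightarrow> linked_by P n A A"
  unfolding linked_by_def by (intro exI[of _ "[A]"]) auto

lemma linked_by_step: assumes "linked_by P n A0 A" "linked_one_step n A B" "P B"
  shows "linked_by P n A0 B"
proof -
  obtain xs where xs: "xs \<noteq> []" "hd xs = A0" "last xs = A" "\<forall>X\<in>set xs. P X"
    "\<forall>i. Suc i < length xs \<longrightarrow> linked_one_step n (xs ! i) (xs ! Suc i)"
    using assms(1) unfolding linked_by_def by blast
  let ?ys = "xs @ [B]"
  have "\<forall>i. Suc i < length ?ys \<longrightarrow> linked_one_step n (?ys ! i) (?ys ! Suc i)"
  proof (intro allI impI)
    fix i assume i: "Suc i < length ?ys"
    show "linked_one_step n (?ys ! i) (?ys ! Suc i)"
    proof (cases "Suc i < length xs")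
      case True
      then show ?thesis using xs(5) by (simp add: nth_append)
    next
      case False
      then have "Suc i = length xs" using i by simp
      then have "i = length xs - 1" by simp
      then have "?ys ! i = A" "?ys ! Suc i = B" using xs(1,3)
        by (auto simp: nth_append last_conv_nth)
      then show ?thesis using assms(2) by simp
    qed
  qed
  then show ?thesis unfolding linked_by_def using xs assms(3)
    by (intro exI[of _ ?ys]) auto
qed

lemma linked_by_mono: "linked_by P n A B \<Longrightarrow> (\<And>X. P X \<Longrightarrow> Q X) \<Longrightarrow> linked_by Q n A B"
  unfolding linked_by_def by blast

lemma step_mult:
  fixes A :: "'a::idom mat"
  assumes L: "linked_by P n A0 A" and A: "A \<in> carrier_mat n n" and dA: "det A \<noteq> 0"
    and k: "k < n" and l: "l \<noteq> 0" and P: "P (multcol k l A)"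
  shows "linked_by P n A0 (multcol k l A)"
proof -
  have eq: "multcol k l A = A * multrow_mat n k l" using multcol_mat[OF A] .
  have "linked_one_step n A (A * multrow_mat n k l)"
  proof (rule one_step_right[OF A])
    show "transpose_mat (multrow_mat n k l) = multrow_mat n k l"
      by (rule eq_matI) auto
    show "det (multrow_mat n k l) \<noteq> 0" unfolding det_multrow_mat[OF k] using l .
  qed (auto simp: dA)
  then show ?thesis using linked_by_step[OF L] P eq by simp
qed

lemma step_add:
  fixes A :: "'a::idom mat"
  assumes L: "linked_by P n A0 A" and A: "A \<in> carrier_mat n n" and dA: "det A \<noteq> 0"
    and jk: "j < n" "k < n" "j \<noteq> k"
    and P1: "P (swapcols j k (addcol t k j A))" and P2: "P (addcol t k j A)"
  shows "linked_by P n A0 (addcol t k j A)"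
proof -
  let ?E = "addrow_mat n t j k" and ?W = "swaprows_mat n j k"
  have E: "?E \<in> carrier_mat n n" and W: "?W \<in> carrier_mat n n" by auto
  have e1: "addcol t k j A = A * ?E" using addcol_mat[OF A jk(1)] .
  have X1: "swapcols j k (addcol t k j A) = A * (?E * ?W)"
    using swapcols_mat[of "addcol t k j A" n n j k] A jk e1 E W
    by (simp add: assoc_mult_mat[OF A E W])
  have S1: "?E * ?W = swapcols j k ?E" using swapcols_mat[OF E jk(1,2)] by simp
  have dE: "det ?E = 1" by (rule det_addrow_mat[OF jk(3)])
  have dS1: "det (?E * ?W) = - 1" unfolding S1 using det_swapcols[OF jk(1,2,3) E] dE by simp
  have tS1: "transpose_mat (?E * ?W) = ?E * ?W" unfolding S1
    by (rule eq_matI) (use jk in auto)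
  have l1: "linked_one_step n A (swapcols j k (addcol t k j A))"
    unfolding X1 by (rule one_step_right[OF A _ tS1 dA]) (use E W dS1 in auto)
  have L1: "linked_by P n A0 (swapcols j k (addcol t k j A))" by (rule linked_by_step[OF L l1 P1])
  let ?X = "swapcols j k (addcol t k j A)"
  have X: "?X \<in> carrier_mat n n" using A by auto
  have dX: "det ?X \<noteq> 0" unfolding X1 using det_mult[OF A, of "?E * ?W"] E W dS1 dA by simp
  have eq2: "swapcols j k ?X = addcol t k j A" by (rule eq_matI) (use A jk in auto)
  have "linked_one_step n ?X (?X * ?W)"
  proof (rule one_step_right[OF X W _ dX])
    show "transpose_mat ?W = ?W" by (rule eq_matI) auto
    show "det ?W \<noteq> 0" unfolding det_swaprows_mat[OF jk] by simp
  qed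
  moreover have "?X * ?W = addcol t k j A" using swapcols_mat[OF X jk(1,2)] eq2 by simp
  ultimately show ?thesis using linked_by_step[OF L1] P2 by simp
qed




definition hom_deg :: "(nat \<Rightarrow> 'a::comm_ring_1 set) \<Rightarrow> (nat \<Rightarrow> int) \<Rightarrow> (nat \<Rightarrow> int) \<Rightarrow> 'a mat \<Rightarrow> bool" where
  "hom_deg G d e M \<longleftrightarrow> (\<forall>i<dim_row M. \<forall>j<dim_col M. M $$ (i,j) \<in> hcomp G (e j - d i))"

lemma hom_deg_homogeneous: "hom_deg G d e M \<Longrightarrow> homogeneous_mat G M"
  unfolding hom_deg_def homogeneous_mat_def by blast

lemma hom_addcol: assumes G: "gclosed G" and h: "hom_deg G d e M" and t: "t \<in> hcomp G (e k - e j)"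
  and j: "j < dim_col M"
  shows "hom_deg G d e (addcol t k j M)"
  unfolding hom_deg_def
proof (intro allI impI)
  fix i l assume i: "i < dim_row (addcol t k j M)" and l: "l < dim_col (addcol t k j M)"
  have hij: "M $$ (i, j) \<in> hcomp G (e j - d i)" using h i j unfolding hom_deg_def by auto
  have hil: "M $$ (i, l) \<in> hcomp G (e l - d i)" using h i l unfolding hom_deg_def by auto
  show "addcol t k j M $$ (i, l) \<in> hcomp G (e l - d i)"
  proof (cases "k = l")
    case True
    have "t * M $$ (i, j) \<in> hcomp G ((e k - e j) + (e j - d i))" by (rule hcomp_mult[OF G t hij])
    then have "t * M $$ (i, j) \<in> hcomp G (e l - d i)" using True by simp
    then show ?thesis using True i l hil hcomp_add[OF G] by auto
  next
    case False
    then show ?thesis using i l hil by auto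
  qed
qed

lemma hom_swapcols: assumes h: "hom_deg G d e M" and jk: "j < dim_col M" "k < dim_col M"
  shows "hom_deg G d (\<lambda>x. if x = j then e k else if x = k then e j else e x) (swapcols j k M)"
  using h jk unfolding hom_deg_def by auto

lemma hom_multcol: assumes G: "gclosed G" and h: "hom_deg G d e M" and t: "t \<in> hcomp G \<delta>"
  and e': "e' k = e k + \<delta>" "\<And>x. x \<noteq> k \<Longrightarrow> e' x = e x"
  shows "hom_deg G d e' (multcol k t M)"
  unfolding hom_deg_def
proof (intro allI impI)
  fix i l assume i: "i < dim_row (multcol k t M)" and l: "l < dim_col (multcol k t M)"
  have hil: "M $$ (i, l) \<in> hcomp G (e l - d i)" using h i l unfolding hom_deg_def by auto
  show "multcol k t M $$ (i, l) \<in> hcomp G (e' l - d i)"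
  proof (cases "k = l")
    case True
    have "t * M $$ (i, l) \<in> hcomp G (\<delta> + (e l - d i))" by (rule hcomp_mult[OF G t hil])
    then show ?thesis using True i l e' by (auto simp: algebra_simps)
  next
    case False
    then show ?thesis using i l hil e' by auto
  qed
qed

lemma hstep_add:
  fixes A :: "'a::idom mat"
  assumes G: "gclosed G" and L: "linked_by (homogeneous_mat G) n A0 A" and A: "A \<in> carrier_mat n n"
    and dA: "det A \<noteq> 0" and jk: "j < n" "k < n" "j \<noteq> k"
    and h: "hom_deg G d e A" and t: "t \<in> hcomp G (e k - e j)"
  shows "linked_by (homogeneous_mat G) n A0 (addcol t k j A)"
proof (rule step_add[OF L A dA jk])
  have h1: "hom_deg G d e (addcol t k j A)" by (rule hom_addcol[OF G h t]) (use A jk in auto)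
  then show "homogeneous_mat G (addcol t k j A)" by (rule hom_deg_homogeneous)
  show "homogeneous_mat G (swapcols j k (addcol t k j A))"
    by (rule hom_deg_homogeneous, rule hom_swapcols[OF h1]) (use A jk in auto)
qed

lemma hstep_mult:
  fixes A :: "'a::idom mat"
  assumes G: "gclosed G" and L: "linked_by (homogeneous_mat G) n A0 A" and A: "A \<in> carrier_mat n n"
    and dA: "det A \<noteq> 0" and k: "k < n" and l: "l \<noteq> 0"
    and h: "hom_deg G d e A" and t: "l \<in> hcomp G \<delta>"
  shows "linked_by (homogeneous_mat G) n A0 (multcol k l A)"
proof (rule step_mult[OF L A dA k l])
  show "homogeneous_mat G (multcol k l A)"
    by (rule hom_deg_homogeneous, rule hom_multcol[OF G h t, of "e(k := e k + \<delta>)"]) auto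
qed

lemma det_multcol: assumes A: "(A::'a::comm_ring_1 mat) \<in> carrier_mat n n" and k: "k < n"
  shows "det (multcol k l A) = l * det A"
proof -
  have "det (A * multrow_mat n k l) = det A * det (multrow_mat n k l)"
    by (rule det_mult[OF A]) auto
  then show ?thesis unfolding multcol_mat[OF A] det_multrow_mat[OF k] by simp
qed




fun ph1 :: "'a::comm_ring_1 mat \<Rightarrow> 'a \<Rightarrow> (nat \<Rightarrow> 'a) \<Rightarrow> nat \<Rightarrow> 'a mat" where
  "ph1 A dd u 0 = multcol 0 dd A"
| "ph1 A dd u (Suc K) = addcol (- u K) 0 (Suc K) (ph1 A dd u K)"

fun ph2 :: "'a::comm_ring_1 mat \<Rightarrow> 'a \<Rightarrow> nat \<Rightarrow> 'a mat" where
  "ph2 C s 0 = C"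
| "ph2 C s (Suc K) = multcol (Suc K) s (ph2 C s K)"

fun ph3 :: "'a::comm_ring_1 mat \<Rightarrow> (nat \<Rightarrow> 'a) \<Rightarrow> nat \<Rightarrow> 'a mat" where
  "ph3 D bb 0 = D"
| "ph3 D bb (Suc K) = addcol (- bb K) (Suc K) 0 (ph3 D bb K)"

lemma ph1_props: assumes A: "A \<in> carrier_mat (Suc m) (Suc m)" and K: "K \<le> m"
  shows "ph1 A dd u K \<in> carrier_mat (Suc m) (Suc m) \<and>
    (\<forall>i<Suc m. \<forall>j<Suc m. ph1 A dd u K $$ (i,j) =
        (if j = 0 then dd * A $$ (i,0) - (\<Sum>k<K. u k * A $$ (i, Suc k)) else A $$ (i,j))) \<and>
    det (ph1 A dd u K) = dd * det A"
  using K
proof (induction K)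
  case 0
  then show ?case using A det_multcol[OF A, of 0 dd] by auto
next
  case (Suc K)
  let ?X = "ph1 A dd u K"
  let ?Y = "ph1 A dd u (Suc K)"
  have IH: "?X \<in> carrier_mat (Suc m) (Suc m)"
    "\<And>i j. i<Suc m \<Longrightarrow> j<Suc m \<Longrightarrow> ?X $$ (i,j) =
        (if j = 0 then dd * A $$ (i,0) - (\<Sum>k<K. u k * A $$ (i, Suc k)) else A $$ (i,j))"
    "det ?X = dd * det A" using Suc by auto
  have K: "Suc K < Suc m" using Suc by auto
  have D1: "det (ph1 A dd u (Suc K)) = dd * det A"
    using det_addcol[OF K _ IH(1), of 0 "- u K"] IH(3) by simp
  have E1: "\<forall>i<Suc m. \<forall>j<Suc m. ph1 A dd u (Suc K) $$ (i,j) =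
        (if j = 0 then dd * A $$ (i,0) - (\<Sum>k<Suc K. u k * A $$ (i, Suc k)) else A $$ (i,j))"
    using IH(1) K by (auto simp: IH(2) algebra_simps)
  have C1: "?Y \<in> carrier_mat (Suc m) (Suc m)" using IH(1) unfolding carrier_mat_def by simp
  show ?case by (intro conjI C1 E1 D1)
qed

lemma ph2_props: assumes C: "C \<in> carrier_mat (Suc m) (Suc m)" and K: "K \<le> m"
  shows "ph2 C s K \<in> carrier_mat (Suc m) (Suc m) \<and>
    (\<forall>i<Suc m. \<forall>j<Suc m. ph2 C s K $$ (i,j) = (if 0 < j \<and> j \<le> K then s * C $$ (i,j) else C $$ (i,j))) \<and>
    det (ph2 C s K) = s ^ K * det C"
  using K
proof (induction K)
  case 0
  then show ?case using C by auto
next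
  case (Suc K)
  let ?X = "ph2 C s K"
  let ?Y = "ph2 C s (Suc K)"
  have IH: "?X \<in> carrier_mat (Suc m) (Suc m)"
    "\<And>i j. i<Suc m \<Longrightarrow> j<Suc m \<Longrightarrow> ?X $$ (i,j) = (if 0 < j \<and> j \<le> K then s * C $$ (i,j) else C $$ (i,j))"
    "det ?X = s ^ K * det C" using Suc by auto
  have K: "Suc K < Suc m" using Suc by auto
  have D1: "det (ph2 C s (Suc K)) = s ^ Suc K * det C"
    using det_multcol[OF IH(1) K, of s] IH(3) by simp
  have E1: "\<forall>i<Suc m. \<forall>j<Suc m. ph2 C s (Suc K) $$ (i,j) =
        (if 0 < j \<and> j \<le> Suc K then s * C $$ (i,j) else C $$ (i,j))"
    using IH(1) K by (auto simp: IH(2))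
  have C1: "?Y \<in> carrier_mat (Suc m) (Suc m)" using IH(1) unfolding carrier_mat_def by simp
  show ?case by (intro conjI C1 E1 D1)
qed

lemma ph3_props: assumes D: "D \<in> carrier_mat (Suc m) (Suc m)" and K: "K \<le> m"
  shows "ph3 D bb K \<in> carrier_mat (Suc m) (Suc m) \<and>
    (\<forall>i<Suc m. \<forall>j<Suc m. ph3 D bb K $$ (i,j) =
       (if 0 < j \<and> j \<le> K then - bb (j - 1) * D $$ (i,0) + D $$ (i,j) else D $$ (i,j))) \<and>
    det (ph3 D bb K) = det D"
  using K
proof (induction K)
  case 0
  then show ?case using D by auto
next
  case (Suc K)
  let ?X = "ph3 D bb K"
  let ?Y = "ph3 D bb (Suc K)"
  have IH: "?X \<in> carrier_mat (Suc m) (Suc m)"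
    "\<And>i j. i<Suc m \<Longrightarrow> j<Suc m \<Longrightarrow> ?X $$ (i,j) =
       (if 0 < j \<and> j \<le> K then - bb (j - 1) * D $$ (i,0) + D $$ (i,j) else D $$ (i,j))"
    "det ?X = det D" using Suc by auto
  have K: "Suc K < Suc m" using Suc by auto
  have D1: "det (ph3 D bb (Suc K)) = det D"
    using det_addcol[OF _ _ IH(1), of 0 "Suc K" "- bb K"] IH(3) by simp
  have E1: "\<forall>i<Suc m. \<forall>j<Suc m. ph3 D bb (Suc K) $$ (i,j) =
       (if 0 < j \<and> j \<le> Suc K then - bb (j - 1) * D $$ (i,0) + D $$ (i,j) else D $$ (i,j))"
    using IH(1) K by (auto simp: IH(2))
  have C1: "?Y \<in> carrier_mat (Suc m) (Suc m)" using IH(1) unfolding carrier_mat_def by simp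
  show ?case by (intro conjI C1 E1 D1)
qed




lemma ph1_link:
  fixes A :: "'a::idom mat"
  assumes G: "gclosed G" and A: "A \<in> carrier_mat (Suc m) (Suc m)" and dA: "det A \<noteq> 0"
    and dd: "dd \<noteq> 0" "dd \<in> hcomp G \<delta>" and h: "hom_deg G d e A"
    and u: "\<And>K. K < m \<Longrightarrow> u K \<in> hcomp G (e 0 + \<delta> - e (Suc K))"
    and hA: "homogeneous_mat G A" and K: "K \<le> m"
  shows "linked_by (homogeneous_mat G) (Suc m) A (ph1 A dd u K) \<and>
         hom_deg G d (\<lambda>j. if j = 0 then e 0 + \<delta> else e j) (ph1 A dd u K)"
  using K
proof (induction K)
  case 0
  have "linked_by (homogeneous_mat G) (Suc m) A (multcol 0 dd A)"
    by (rule hstep_mult[OF G linked_by_refl[of "homogeneous_mat G" A, OF hA] A dA _ dd(1) h dd(2)]) simp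
  moreover have "hom_deg G d (\<lambda>j. if j = 0 then e 0 + \<delta> else e j) (multcol 0 dd A)"
    by (rule hom_multcol[OF G h dd(2)]) auto
  ultimately show ?case unfolding ph1.simps by blast
next
  case (Suc K)
  let ?X = "ph1 A dd u K"
  have IH: "linked_by (homogeneous_mat G) (Suc m) A ?X" "hom_deg G d (\<lambda>j. if j = 0 then e 0 + \<delta> else e j) ?X"
    using Suc by auto
  have P: "?X \<in> carrier_mat (Suc m) (Suc m)" "det ?X = dd * det A"
    using ph1_props[OF A, of K dd u] Suc by auto
  have dX: "det ?X \<noteq> 0" using P(2) dd dA by simp
  have t: "- u K \<in> hcomp G ((\<lambda>j. if j = 0 then e 0 + \<delta> else e j) 0 - (\<lambda>j. if j = 0 then e 0 + \<delta> else e j) (Suc K))"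
    using hcomp_uminus[OF G u[of K]] Suc by simp
  have "linked_by (homogeneous_mat G) (Suc m) A (addcol (- u K) 0 (Suc K) ?X)"
    by (rule hstep_add[OF G IH(1) P(1) dX _ _ _ IH(2) t]) (use Suc in auto)
  moreover have "hom_deg G d (\<lambda>j. if j = 0 then e 0 + \<delta> else e j) (addcol (- u K) 0 (Suc K) ?X)"
    by (rule hom_addcol[OF G IH(2) t]) (use P(1) Suc in auto)
  ultimately show ?case by simp
qed

lemma ph2_link:
  fixes C :: "'a::idom mat"
  assumes G: "gclosed G" and L: "linked_by (homogeneous_mat G) (Suc m) A0 C"
    and C: "C \<in> carrier_mat (Suc m) (Suc m)" and dC: "det C \<noteq> 0"
    and s: "s \<noteq> 0" "s \<in> hcomp G \<sigma>" and h: "hom_deg G d e C" and K: "K \<le> m"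
  shows "linked_by (homogeneous_mat G) (Suc m) A0 (ph2 C s K) \<and>
         hom_deg G d (\<lambda>j. if 0 < j \<and> j \<le> K then e j + \<sigma> else e j) (ph2 C s K)"
  using K
proof (induction K)
  case 0
  have "(\<lambda>j. if 0 < j \<and> j \<le> (0::nat) then e j + \<sigma> else e j) = e" by auto
  then show ?case using L h by simp
next
  case (Suc K)
  let ?X = "ph2 C s K"
  let ?e = "\<lambda>j. if 0 < j \<and> j \<le> K then e j + \<sigma> else e j"
  have IH: "linked_by (homogeneous_mat G) (Suc m) A0 ?X" "hom_deg G d ?e ?X"
    using Suc by auto
  have P: "?X \<in> carrier_mat (Suc m) (Suc m)" "det ?X = s ^ K * det C"
    using ph2_props[OF C, of K s] Suc by auto
  have dX: "det ?X \<noteq> 0" using P(2) s dC by simp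
  have "linked_by (homogeneous_mat G) (Suc m) A0 (multcol (Suc K) s ?X)"
    by (rule hstep_mult[OF G IH(1) P(1) dX _ s(1) IH(2) s(2)]) (use Suc in auto)
  moreover have "hom_deg G d (\<lambda>j. if 0 < j \<and> j \<le> Suc K then e j + \<sigma> else e j) (multcol (Suc K) s ?X)"
    by (rule hom_multcol[OF G IH(2) s(2)]) auto
  ultimately show ?case by simp
qed

lemma ph3_link:
  fixes D :: "'a::idom mat"
  assumes G: "gclosed G" and L: "linked_by (homogeneous_mat G) (Suc m) A0 D"
    and D: "D \<in> carrier_mat (Suc m) (Suc m)" and dD: "det D \<noteq> 0"
    and h: "hom_deg G d e D" and bb: "\<And>K. K < m \<Longrightarrow> bb K \<in> hcomp G (e (Suc K) - e 0)"
    and K: "K \<le> m"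
  shows "linked_by (homogeneous_mat G) (Suc m) A0 (ph3 D bb K) \<and> hom_deg G d e (ph3 D bb K)"
  using K
proof (induction K)
  case 0
  then show ?case using L h by simp
next
  case (Suc K)
  let ?X = "ph3 D bb K"
  have IH: "linked_by (homogeneous_mat G) (Suc m) A0 ?X" "hom_deg G d e ?X"
    using Suc by auto
  have P: "?X \<in> carrier_mat (Suc m) (Suc m)" "det ?X = det D"
    using ph3_props[OF D, of K bb] Suc by auto
  have dX: "det ?X \<noteq> 0" using P(2) dD by simp
  have t: "- bb K \<in> hcomp G (e (Suc K) - e 0)"
    using hcomp_uminus[OF G bb[of K]] Suc by simp
  have "linked_by (homogeneous_mat G) (Suc m) A0 (addcol (- bb K) (Suc K) 0 ?X)"
    by (rule hstep_add[OF G IH(1) P(1) dX _ _ _ IH(2) t]) (use Suc in auto)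
  moreover have "hom_deg G d e (addcol (- bb K) (Suc K) 0 ?X)"
    by (rule hom_addcol[OF G IH(2) t]) (use P(1) Suc in auto)
  ultimately show ?case by simp
qed



lemma adj_vec: "(A::'a::comm_ring_1 mat) \<in> carrier_mat m m \<Longrightarrow> c \<in> carrier_vec m \<Longrightarrow> i < m \<Longrightarrow>
  (A *\<^sub>v (adj_mat A *\<^sub>v c)) $ i = det A * c $ i"
proof -
  assume A: "A \<in> carrier_mat m m" and c: "c \<in> carrier_vec m" and i: "i < m"
  have "A *\<^sub>v (adj_mat A *\<^sub>v c) = (A * adj_mat A) *\<^sub>v c"
    using adj_mat(1)[OF A] A c by simp
  also have "\<dots> = (det A \<cdot>\<^sub>m 1\<^sub>m m) *\<^sub>v c" using adj_mat(2)[OF A] by simp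
  finally show ?thesis using i c by (simp add: scalar_prod_def if_distrib if_distribR cong: if_cong)
qed

lemma grading_one: assumes gr: "grading (G :: nat \<Rightarrow> 'a::idom set)" shows "1 \<in> G 0"
proof -
  have G0: "\<And>i. 0 \<in> G i" using gr unfolding grading_def by blast
  have Gm: "\<And>i j x y. x \<in> G i \<Longrightarrow> y \<in> G j \<Longrightarrow> x * y \<in> G (i + j)" using gr unfolding grading_def by blast
  have U: "\<And>x. \<exists>!f. (\<forall>i. f i \<in> G i) \<and> finite {i. f i \<noteq> 0} \<and> x = (\<Sum>i\<in>{i. f i \<noteq> 0}. f i)"
    using gr unfolding grading_def by blast
  obtain f where f: "\<And>i. f i \<in> G i" "finite {i. f i \<noteq> 0}" "1 = (\<Sum>i\<in>{i. f i \<noteq> 0}. f i)"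
    using U[of 1] by blast
  define S where "S = {i. f i \<noteq> 0}"
  have fk: "f k = 0" if k: "k > 0" for k
  proof -
    define x where "x = f k"
    define g where "g = (\<lambda>i. if i = k then x else 0)"
    define h where "h = (\<lambda>i. if k \<le> i then x * f (i - k) else 0)"
    let ?Q = "\<lambda>\<phi>. (\<forall>i. \<phi> i \<in> G i) \<and> finite {i. \<phi> i \<noteq> 0} \<and> x = (\<Sum>i\<in>{i. \<phi> i \<noteq> 0}. \<phi> i)"
    have Qg: "?Q g"
    proof (intro conjI allI)
      fix i show "g i \<in> G i" unfolding g_def x_def using f(1) G0 by auto
    next
      show "finite {i. g i \<noteq> 0}" by (rule finite_subset[of _ "{k}"]) (auto simp: g_def)
    next
      show "x = (\<Sum>i\<in>{i. g i \<noteq> 0}. g i)"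
      proof (cases "x = 0")
        case True
        then have "{i. g i \<noteq> 0} = {}" by (auto simp: g_def)
        then show ?thesis using True by simp
      next
        case False
        then have "{i. g i \<noteq> 0} = {k}" by (auto simp: g_def)
        then show ?thesis by (simp add: g_def)
      qed
    qed
    have Qh: "?Q h"
    proof (intro conjI allI)
      fix i show "h i \<in> G i"
      proof (cases "k \<le> i")
        case True
        have "x * f (i - k) \<in> G (k + (i - k))" unfolding x_def by (rule Gm[OF f(1) f(1)])
        then show ?thesis using True by (simp add: h_def)
      qed (simp add: h_def G0)
    next
      have sub: "{i. h i \<noteq> 0} \<subseteq> (\<lambda>j. j + k) ` S"
      proof
        fix i assume "i \<in> {i. h i \<noteq> 0}"
        then have "k \<le> i" "f (i - k) \<noteq> 0" by (auto simp: h_def split: if_splits)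
        then show "i \<in> (\<lambda>j. j + k) ` S" unfolding S_def by (intro image_eqI[of _ _ "i - k"]) auto
      qed
      have fin: "finite ((\<lambda>j. j + k) ` S)" using f(2) unfolding S_def by simp
      show "finite {i. h i \<noteq> 0}" by (rule finite_subset[OF sub fin])
      have "(\<Sum>i\<in>{i. h i \<noteq> 0}. h i) = (\<Sum>i\<in>(\<lambda>j. j + k) ` S. h i)"
        by (rule sum.mono_neutral_left[OF fin sub]) auto
      also have "\<dots> = (\<Sum>j\<in>S. h (j + k))" by (subst sum.reindex) (auto simp: inj_on_def)
      also have "\<dots> = (\<Sum>j\<in>S. x * f j)" by (simp add: h_def)
      also have "\<dots> = x * (\<Sum>j\<in>S. f j)" by (simp add: sum_distrib_left)
      also have "\<dots> = x" using f(3) unfolding S_def by simp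
      finally show "x = (\<Sum>i\<in>{i. h i \<noteq> 0}. h i)" by simp
    qed
    have "g = h" using U[of x] Qg Qh by blast
    then have "g (k + k) = h (k + k)" by simp
    then have "x * f k = 0" using k by (simp add: g_def h_def)
    then show ?thesis unfolding x_def by simp
  qed
  have "S \<subseteq> {0}" unfolding S_def using fk by auto
  moreover have "S \<noteq> {}"
  proof
    assume "S = {}"
    then have "(1::'a) = 0" using f(3) unfolding S_def by simp
    then show False by simp
  qed
  ultimately have "S = {0}" by auto
  then have "1 = f 0" using f(3) unfolding S_def by simp
  then show ?thesis using f(1)[of 0] by simp
qed

lemma grading_gclosed: "grading (G :: nat \<Rightarrow> 'a::idom set) \<Longrightarrow> gclosed G"
  using grading_one[of G] unfolding grading_def gclosed_def by blast




lemma block_mat_carrier: "A' \<in> carrier_mat m m \<Longrightarrow> block_mat a b c A' \<in> carrier_mat (Suc m) (Suc m)"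
  unfolding block_mat_def using four_block_carrier_mat[of "mat 1 1 (\<lambda>_. a)" 1 1 A' m m] by simp

lemma block_mat_index: assumes "A' \<in> carrier_mat m m" "b \<in> carrier_vec m" "c \<in> carrier_vec m"
  "i < Suc m" "j < Suc m"
  shows "block_mat a b c A' $$ (i,j) = (if i = 0 then (if j = 0 then a else b $ (j-1))
     else (if j = 0 then c $ (i-1) else A' $$ (i-1, j-1)))"
  using assms unfolding block_mat_def by (subst index_mat_four_block) auto


lemma core:
  fixes a :: "'a::idom" and b c :: "'a vec" and A' :: "'a mat" and m :: nat
  assumes G: "gclosed G" and A': "A' \<in> carrier_mat m m" and b: "b \<in> carrier_vec m"
    and c: "c \<in> carrier_vec m" and dA: "det (block_mat a b c A') \<noteq> 0" and dA': "det A' \<noteq> 0"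
    and m: "m > 0" and h: "hom_deg G d e (block_mat a b c A')"
  shows "\<exists>b0 B'. B' \<in> carrier_mat m m \<and> homogeneous_mat G (block_mat b0 (0\<^sub>v m) (0\<^sub>v m) B') \<and>
     linked_by (homogeneous_mat G) (m + 1) (block_mat a b c A') (block_mat b0 (0\<^sub>v m) (0\<^sub>v m) B')"
proof -
  define A where "A = block_mat a b c A'"
  have AC: "A \<in> carrier_mat (Suc m) (Suc m)" unfolding A_def by (rule block_mat_carrier[OF A'])
  have Ai: "\<And>i j. i < Suc m \<Longrightarrow> j < Suc m \<Longrightarrow> A $$ (i,j) = (if i = 0 then (if j = 0 then a else b $ (j-1))
     else (if j = 0 then c $ (i-1) else A' $$ (i-1, j-1)))"
    unfolding A_def by (rule block_mat_index[OF A' b c])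
  have hA: "\<And>i j. i < Suc m \<Longrightarrow> j < Suc m \<Longrightarrow> A $$ (i,j) \<in> hcomp G (e j - d i)"
    using h AC unfolding A_def hom_deg_def by auto
  have dA2: "det A \<noteq> 0" using dA unfolding A_def .
  obtain m' where m': "m = Suc m'" using m by (cases m) auto
  define \<delta> where "\<delta> = (\<Sum>j<m. e (Suc j)) - (\<Sum>i<m. d (Suc i))"
  define dd where "dd = det A'"
  have hA': "\<And>i j. i < m \<Longrightarrow> j < m \<Longrightarrow> A' $$ (i,j) \<in> hcomp G (e (Suc j) - d (Suc i))"
    using hA[of "Suc _" "Suc _"] Ai by auto
  have hdd: "dd \<in> hcomp G \<delta>" unfolding dd_def \<delta>_def by (rule hcomp_det[OF G A' hA'])
  define uv where "uv = adj_mat A' *\<^sub>v c"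
  define u where "u = (\<lambda>K. uv $ K)"
  have adjC: "adj_mat A' \<in> carrier_mat m m" using adj_mat(1)[OF A'] .
  have dA'r: "dim_row A' = m" "dim_col A' = m" using A' by auto
  have u_eq: "u K = (\<Sum>j<m. cofactor A' j K * c $ j)" if K: "K < m" for K
    using K adjC c unfolding u_def uv_def
    by (simp add: dA'r scalar_prod_def adj_mat_def atLeast0LessThan)
  have hu: "u K \<in> hcomp G (e 0 + \<delta> - e (Suc K))" if K: "K < m" for K
    unfolding u_eq[OF K]
  proof (rule hcomp_sum[OF G])
    fix j assume "j \<in> {..<m}"
    then have j: "j < m" by simp
    have A'': "A' \<in> carrier_mat (Suc m') (Suc m')" using A' m' by simp
    have "cofactor A' j K \<in> hcomp G (((\<Sum>t<Suc m'. e (Suc t)) - e (Suc K)) - ((\<Sum>t<Suc m'. d (Suc t)) - d (Suc j)))"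
      by (rule hcomp_cofactor[OF G A'', of "\<lambda>t. e (Suc t)" "\<lambda>t. d (Suc t)"]) (use hA' j K m' in auto)
    moreover have "c $ j \<in> hcomp G (e 0 - d (Suc j))" using hA[of "Suc j" 0] Ai[of "Suc j" 0] j by simp
    ultimately have "cofactor A' j K * c $ j \<in> hcomp G ((((\<Sum>t<Suc m'. e (Suc t)) - e (Suc K)) - ((\<Sum>t<Suc m'. d (Suc t)) - d (Suc j))) + (e 0 - d (Suc j)))"
      by (rule hcomp_mult[OF G])
    then show "cofactor A' j K * c $ j \<in> hcomp G (e 0 + \<delta> - e (Suc K))"
      unfolding \<delta>_def m' by (simp add: algebra_simps)
  qed
  have ddnz: "dd \<noteq> 0" using dA' unfolding dd_def .
  define e1 where "e1 = (\<lambda>j. if j = 0 then e 0 + \<delta> else e j)"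
  define C where "C = ph1 A dd u m"
  have homA: "homogeneous_mat G A" using h unfolding A_def by (rule hom_deg_homogeneous)
  have hd: "hom_deg G d e A" using h unfolding A_def .
  have L1: "linked_by (homogeneous_mat G) (Suc m) A C" "hom_deg G d e1 C"
    using ph1_link[OF G AC dA2 ddnz hdd hd hu homA, of m] unfolding C_def e1_def by auto
  have P1: "C \<in> carrier_mat (Suc m) (Suc m)"
    "\<And>i j. i<Suc m \<Longrightarrow> j<Suc m \<Longrightarrow> C $$ (i,j) =
        (if j = 0 then dd * A $$ (i,0) - (\<Sum>k<m. u k * A $$ (i, Suc k)) else A $$ (i,j))"
    "det C = dd * det A" using ph1_props[OF AC, of m dd u] unfolding C_def by auto
  have uvd: "dim_vec uv = m" unfolding uv_def using adjC by simp
  have C0: "C $$ (Suc i, 0) = 0" if i: "i < m" for i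
  proof -
    have "(\<Sum>k<m. u k * A $$ (Suc i, Suc k)) = (A' *\<^sub>v uv) $ i"
      using i A' uvd unfolding u_def by (simp add: Ai scalar_prod_def atLeast0LessThan dA'r mult.commute)
    also have "\<dots> = dd * c $ i" unfolding uv_def dd_def by (rule adj_vec[OF A' c i])
    finally show ?thesis using i by (simp add: P1(2) Ai)
  qed
  define s where "s = C $$ (0, 0)"
  have dC: "det C \<noteq> 0" using P1(3) ddnz dA2 by simp
  have snz: "s \<noteq> 0"
  proof
    assume s0: "s = 0"
    have "det C = (\<Sum>i<Suc m. C $$ (i,0) * cofactor C i 0)" by (rule laplace_expansion_column[OF P1(1)]) simp
    also have "\<dots> = 0"
    proof (rule sum.neutral, intro ballI)
      fix i assume "i \<in> {..<Suc m}"
      then show "C $$ (i,0) * cofactor C i 0 = 0" using s0 C0 unfolding s_def by (cases i) auto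
    qed
    finally show False using dC by simp
  qed
  have hs: "s \<in> hcomp G (e1 0 - d 0)" using L1(2) P1(1) unfolding s_def hom_deg_def by auto
  define \<sigma> where "\<sigma> = e1 0 - d 0"
  define e2 where "e2 = (\<lambda>j. if 0 < j \<and> j \<le> m then e1 j + \<sigma> else e1 j)"
  define D where "D = ph2 C s m"
  have L2: "linked_by (homogeneous_mat G) (Suc m) A D" "hom_deg G d e2 D"
    using ph2_link[OF G L1(1) P1(1) dC snz, of \<sigma> d e1 m] hs L1(2) unfolding D_def e2_def \<sigma>_def by auto
  have P2: "D \<in> carrier_mat (Suc m) (Suc m)"
    "\<And>i j. i<Suc m \<Longrightarrow> j<Suc m \<Longrightarrow> D $$ (i,j) = (if 0 < j \<and> j \<le> m then s * C $$ (i,j) else C $$ (i,j))"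
    "det D = s ^ m * det C" using ph2_props[OF P1(1), of m s] unfolding D_def by auto
  have dD: "det D \<noteq> 0" using P2(3) snz dC by simp
  define bb where "bb = (\<lambda>K. b $ K)"
  have hbb: "bb K \<in> hcomp G (e2 (Suc K) - e2 0)" if K: "K < m" for K
  proof -
    have "b $ K \<in> hcomp G (e (Suc K) - d 0)" using hA[of 0 "Suc K"] Ai[of 0 "Suc K"] K by simp
    then show ?thesis using K unfolding bb_def e2_def e1_def \<sigma>_def by (simp add: algebra_simps)
  qed
  define F where "F = ph3 D bb m"
  have L3: "linked_by (homogeneous_mat G) (Suc m) A F" "hom_deg G d e2 F"
    using ph3_link[OF G L2(1) P2(1) dD L2(2) hbb] unfolding F_def by auto
  have P3: "F \<in> carrier_mat (Suc m) (Suc m)"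
    "\<And>i j. i<Suc m \<Longrightarrow> j<Suc m \<Longrightarrow> F $$ (i,j) =
       (if 0 < j \<and> j \<le> m then - bb (j - 1) * D $$ (i,0) + D $$ (i,j) else D $$ (i,j))"
    using ph3_props[OF P2(1), of m bb] unfolding F_def by auto
  have BC2: "block_mat s (0\<^sub>v m) (0\<^sub>v m) (s \<cdot>\<^sub>m A') \<in> carrier_mat (Suc m) (Suc m)"
    by (rule block_mat_carrier) (use A' in simp)
  have FE: "F = block_mat s (0\<^sub>v m) (0\<^sub>v m) (s \<cdot>\<^sub>m A')"
  proof (rule eq_matI)
    have BC: "block_mat s (0\<^sub>v m) (0\<^sub>v m) (s \<cdot>\<^sub>m A') \<in> carrier_mat (Suc m) (Suc m)"
      by (rule block_mat_carrier) (use A' in simp)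
    fix i j assume i: "i < dim_row (block_mat s (0\<^sub>v m) (0\<^sub>v m) (s \<cdot>\<^sub>m A'))"
      and j: "j < dim_col (block_mat s (0\<^sub>v m) (0\<^sub>v m) (s \<cdot>\<^sub>m A'))"
    then have i: "i < Suc m" and j: "j < Suc m" using BC by auto
    have R: "block_mat s (0\<^sub>v m) (0\<^sub>v m) (s \<cdot>\<^sub>m A') $$ (i,j) = (if i = 0 then (if j = 0 then s else 0)
     else (if j = 0 then 0 else s * A' $$ (i-1, j-1)))"
      using block_mat_index[of "s \<cdot>\<^sub>m A'" m "0\<^sub>v m" "0\<^sub>v m" i j s] A' i j by auto
    show "F $$ (i, j) = block_mat s (0\<^sub>v m) (0\<^sub>v m) (s \<cdot>\<^sub>m A') $$ (i, j)"
    proof (cases i)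
      case 0
      then show ?thesis using i j unfolding R
        by (cases j) (auto simp: P3(2) P2(2) P1(2) Ai s_def bb_def)
    next
      case (Suc i')
      then show ?thesis using i j C0[of i'] unfolding R
        by (cases j) (auto simp: P3(2) P2(2) Ai bb_def P1(2))
    qed
  qed (use P3(1) carrier_matD[OF BC2] in auto)
  show ?thesis
  proof (intro exI conjI)
    show "s \<cdot>\<^sub>m A' \<in> carrier_mat m m" using A' by simp
    show "homogeneous_mat G (block_mat s (0\<^sub>v m) (0\<^sub>v m) (s \<cdot>\<^sub>m A'))"
      using hom_deg_homogeneous[OF L3(2)] FE by simp
    show "linked_by (homogeneous_mat G) (m + 1) (block_mat a b c A') (block_mat s (0\<^sub>v m) (0\<^sub>v m) (s \<cdot>\<^sub>m A'))"
      using L3(1) FE unfolding A_def by simp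
  qed
qed


theorem lemma7p6:
  fixes a :: "'a::idom" and b c :: "'a vec" and A' :: "'a mat" and m :: nat
  assumes "A' \<in> carrier_mat m m" and "b \<in> carrier_vec m" and "c \<in> carrier_vec m"
    and "det (block_mat a b c A') \<noteq> 0" and "det A' \<noteq> 0"
    and "b \<noteq> 0\<^sub>v m" and "c \<noteq> 0\<^sub>v m"
  shows "(\<exists>b0 B'. B' \<in> carrier_mat m m \<and>
            linked (m + 1) (block_mat a b c A') (block_mat b0 (0\<^sub>v m) (0\<^sub>v m) B'))
       \<and> (\<forall>G. grading G \<and> G 1 \<noteq> {0} \<and> homogeneous_mat G (block_mat a b c A') \<longrightarrow>
            (\<exists>b0 B'. B' \<in> carrier_mat m m \<and>
               homogeneous_mat G (block_mat b0 (0\<^sub>v m) (0\<^sub>v m) B') \<and>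
               linked_by (homogeneous_mat G) (m + 1) (block_mat a b c A')
                  (block_mat b0 (0\<^sub>v m) (0\<^sub>v m) B')))"
proof -
  have mpos: "m > 0"
  proof (rule ccontr)
    assume "\<not> m > 0"
    then have "m = 0" by simp
    then have "b = 0\<^sub>v m" using assms(2) by (intro eq_vecI) auto
    then show False using assms(6) by simp
  qed
  define U where "U = (\<lambda>_::nat. (UNIV :: 'a set))"
  have gU: "gclosed U" unfolding gclosed_def U_def by simp
  have hU: "hom_deg U (\<lambda>_. 0) (\<lambda>_. 0) (block_mat a b c A')"
    unfolding hom_deg_def hcomp_def U_def by simp
  obtain b0 B' where B: "B' \<in> carrier_mat m m"
    "linked_by (homogeneous_mat U) (m + 1) (block_mat a b c A') (block_mat b0 (0\<^sub>v m) (0\<^sub>v m) B')"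
    using core[OF gU assms(1-5) mpos hU] by blast
  have part1: "\<exists>b0 B'. B' \<in> carrier_mat m m \<and>
            linked (m + 1) (block_mat a b c A') (block_mat b0 (0\<^sub>v m) (0\<^sub>v m) B')"
    using B(1) linked_by_mono[OF B(2), of "\<lambda>_. True"] by blast
  have part2: "\<exists>b0 B'. B' \<in> carrier_mat m m \<and>
               homogeneous_mat G (block_mat b0 (0\<^sub>v m) (0\<^sub>v m) B') \<and>
               linked_by (homogeneous_mat G) (m + 1) (block_mat a b c A')
                  (block_mat b0 (0\<^sub>v m) (0\<^sub>v m) B')"
    if H: "grading G \<and> G 1 \<noteq> {0} \<and> homogeneous_mat G (block_mat a b c A')" for G
  proof -
    have gG: "gclosed G" using H grading_gclosed by blast
    obtain d e where "hom_deg G d e (block_mat a b c A')"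
      using H unfolding homogeneous_mat_def hom_deg_def by blast
    then show ?thesis using core[OF gG assms(1-5) mpos] by blast
  qed
  show ?thesis using part1 part2 by blast
qed

end
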